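(* Let $S^1\times S^2=\{(\theta,x)\in S^1\times D^3:|x|=1\}=\partial(S^1\times D^3)$, where $D^3$ is the closed unit ball, and let $i:S^1\times S^2\to S^1\times D^3$ be the inclusion. Then there exist contact forms $\lambda_A$ and $\lambda_B$ on $S^1\times S^2$ with $d\lambda_A=i^*\omega_A$ and $d\lambda_B=i^*\omega_B$.
   Context: Coordinates: $\theta\in\mathbb{R}/2\pi\mathbb{Z}$, $x=(x_1,x_2,x_3)\in D^3$. $\omega_A=x_1(d\theta\, dx_1+dx_2\, dx_3)+x_2(d\theta\, dx_2+dx_3\, dx_1)-2x_3(d\theta\, dx_3+dx_1\, dx_2)$ on $S^1\times D^3$. $\omega_B$ is the 2-form on the mapping torus $([0,2\pi]\times D^3)/\sim$ (diffeomorphic to $S^1\times D^3$, with boundary $S^1\times S^2$) obtained from the same expression $x_1(d\theta\, dx_1+dx_2\, dx_3)+x_2(d\theta\, dx_2+dx_3\, dx_1)-2x_3(d\theta\, dx_3+dx_1\, dx_2)$ on $[0,2\pi]\times D^3$ by gluing $\{2\pi\}\times D^3$ to $\{0\}\times D^3$ via $\phi(2\pi,x_1,x_2,x_3)=(0,x_1,-x_2,-x_3)$, which satisfies $\phi^*\omega=\omega$; for $\omega_B$, $S^1\times S^2$ denotes the boundary of this mapping torus. *)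

theory Defs
  imports "HOL-Analysis.Analysis"
begin

text \<open>Ambient coordinates: a point is a pair (theta, x) with theta real and x in R^3.
  S^1 x D^3 is covered by R x D^3 (theta modulo 2 pi).  Differential forms are
  represented on the ambient space R x R^3; a 1-form lambda = sum c_j dy_j is given by
  its coefficient field c, via lambda_p(u) = c p \<bullet> u.\<close>

fun Ck :: "nat \<Rightarrow> ('a::euclidean_space \<Rightarrow> real) \<Rightarrow> bool" where
  "Ck 0 f = continuous_on UNIV f"
| "Ck (Suc k) f = (f differentiable_on UNIV \<and>
      (\<forall>i\<in>Basis. Ck k (\<lambda>x. frechet_derivative f (at x) i)))"

definition smooth_fun :: "('a::euclidean_space \<Rightarrow> real) \<Rightarrow> bool" where
  "smooth_fun f = (\<forall>k. Ck k f)"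

definition smooth_field :: "('a::euclidean_space \<Rightarrow> 'b::euclidean_space) \<Rightarrow> bool" where
  "smooth_field c = (\<forall>b\<in>Basis. smooth_fun (\<lambda>p. c p \<bullet> b))"

type_synonym pt = "real \<times> (real^3)"

definition d_form :: "(pt \<Rightarrow> pt) \<Rightarrow> pt \<Rightarrow> pt \<Rightarrow> pt \<Rightarrow> real" where
  "d_form c p u v = frechet_derivative c (at p) u \<bullet> v - frechet_derivative c (at p) v \<bullet> u"

text \<open>The 2-form
  x1(d\<theta> dx1+dx2 dx3)+x2(d\<theta> dx2+dx3 dx1)-2x3(d\<theta> dx3+dx1 dx2),
  with (\<alpha>\<and>\<beta>)(u,v) = \<alpha>(u)\<beta>(v) - \<alpha>(v)\<beta>(u).\<close>
definition omega :: "pt \<Rightarrow> pt \<Rightarrow> pt \<Rightarrow> real" where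
  "omega p u v = (let x = snd p; a = fst u; U = snd u; b = fst v; V = snd v in
      x$1 * ((a * V$1 - b * U$1) + (U$2 * V$3 - U$3 * V$2))
    + x$2 * ((a * V$2 - b * U$2) + (U$3 * V$1 - U$1 * V$3))
    - 2 * x$3 * ((a * V$3 - b * U$3) + (U$1 * V$2 - U$2 * V$1)))"

definition bdry_pt :: "pt \<Rightarrow> bool" where
  "bdry_pt p \<longleftrightarrow> norm (snd p) = 1"

definition tangent :: "pt \<Rightarrow> pt \<Rightarrow> bool" where
  "tangent p u \<longleftrightarrow> snd u \<bullet> snd p = 0"

text \<open>d(i^* lambda) = i^* omega on S^1 x S^2.\<close>
definition primitive_on_bdry :: "(pt \<Rightarrow> pt) \<Rightarrow> (pt \<Rightarrow> pt \<Rightarrow> pt \<Rightarrow> real) \<Rightarrow> bool" where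
  "primitive_on_bdry c w \<longleftrightarrow> (\<forall>p u v. bdry_pt p \<longrightarrow> tangent p u \<longrightarrow> tangent p v \<longrightarrow>
       d_form c p u v = w p u v)"

text \<open>Contact condition: i^* lambda \<and> d(i^* lambda) is nowhere zero on S^1 x S^2.\<close>
definition contact_on_bdry :: "(pt \<Rightarrow> pt) \<Rightarrow> bool" where
  "contact_on_bdry c \<longleftrightarrow> (\<forall>p. bdry_pt p \<longrightarrow> (\<exists>u v w. tangent p u \<and> tangent p v \<and> tangent p w \<and>
       (c p \<bullet> u) * d_form c p v w + (c p \<bullet> v) * d_form c p w u
       + (c p \<bullet> w) * d_form c p u v \<noteq> 0))"

text \<open>Forms on S^1 x D^3: invariant under theta \<mapsto> theta + 2 pi.\<close>
definition periodic_A :: "(pt \<Rightarrow> pt) \<Rightarrow> bool" where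
  "periodic_A c \<longleftrightarrow> (\<forall>t x. c (t + 2 * pi, x) = c (t, x))"

text \<open>Mapping torus: deck transformation T(theta,x) = (theta - 2 pi, phi x),
  phi(x1,x2,x3) = (x1,-x2,-x3); forms on the mapping torus are T-invariant forms.\<close>
definition phi3 :: "real^3 \<Rightarrow> real^3" where
  "phi3 x = vector [x$1, - x$2, - x$3]"

definition deckB :: "pt \<Rightarrow> pt" where
  "deckB p = (fst p - 2 * pi, phi3 (snd p))"

definition invariant_B :: "(pt \<Rightarrow> pt) \<Rightarrow> bool" where
  "invariant_B c \<longleftrightarrow> (\<forall>p u. c (deckB p) \<bullet> (fst u, phi3 (snd u)) = c p \<bullet> u)"

end

theory Submission imports Defs begin

inductive poly_fun :: "(pt \<Rightarrow> real) \<Rightarrow> bool" where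
  pf_const: "poly_fun (\<lambda>p. k)"
| pf_fst: "poly_fun (\<lambda>p. fst p)"
| pf_snd: "poly_fun (\<lambda>p. snd p $ i)"
| pf_add: "poly_fun f \<Longrightarrow> poly_fun g \<Longrightarrow> poly_fun (\<lambda>p. f p + g p)"
| pf_mult: "poly_fun f \<Longrightarrow> poly_fun g \<Longrightarrow> poly_fun (\<lambda>p. f p * g p)"

lemma snd_nth_deriv: "((\<lambda>p::pt. snd p $ i) has_derivative (\<lambda>u. snd u $ i)) F"
proof -
  have "bounded_linear (\<lambda>p::pt. snd p $ i)"
    using bounded_linear_compose[OF bounded_linear_vec_nth[of i] bounded_linear_snd[where 'a=real]] by (simp add: o_def)
  then show ?thesis by (rule bounded_linear_imp_has_derivative)
qed

lemma poly_fun_deriv: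
  "poly_fun f \<Longrightarrow> \<exists>D. (\<forall>x. (f has_derivative D x) (at x)) \<and> (\<forall>u. poly_fun (\<lambda>x. D x u))"
proof (induction rule: poly_fun.induct)
  case (pf_const k)
  then show ?case by (intro exI[of _ "\<lambda>x u. 0"]) (auto intro: poly_fun.intros)
next
  case pf_fst
  then show ?case by (intro exI[of _ "\<lambda>x u. fst u"]) (auto intro: poly_fun.intros has_derivative_fst[OF has_derivative_ident])
next
  case (pf_snd i)
  then show ?case by (intro exI[of _ "\<lambda>x u. snd u $ i"]) (auto intro: poly_fun.intros snd_nth_deriv)
next
  case (pf_add f g)
  then obtain D1 D2 where "\<forall>x. (f has_derivative D1 x) (at x)" "\<forall>u. poly_fun (\<lambda>x. D1 x u)"
     "\<forall>x. (g has_derivative D2 x) (at x)" "\<forall>u. poly_fun (\<lambda>x. D2 x u)" by blast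
  then show ?case by (intro exI[of _ "\<lambda>x u. D1 x u + D2 x u"]) (auto intro: poly_fun.intros has_derivative_add)
next
  case (pf_mult f g)
  then obtain D1 D2 where "\<forall>x. (f has_derivative D1 x) (at x)" "\<forall>u. poly_fun (\<lambda>x. D1 x u)"
     "\<forall>x. (g has_derivative D2 x) (at x)" "\<forall>u. poly_fun (\<lambda>x. D2 x u)" by blast
  then show ?case by (intro exI[of _ "\<lambda>x u. f x * D2 x u + D1 x u * g x"]) (use pf_mult.hyps in \<open>auto intro!: poly_fun.intros has_derivative_mult\<close>)
qed

lemma poly_fun_Ck: "poly_fun f \<Longrightarrow> Ck k f"
proof (induction k arbitrary: f)
  case 0
  then obtain D where "\<forall>x. (f has_derivative D x) (at x)" using poly_fun_deriv by blast
  then show ?case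
    by (auto intro!: continuous_at_imp_continuous_on has_derivative_continuous)
next
  case (Suc k)
  then obtain D where D: "\<forall>x. (f has_derivative D x) (at x)" "\<forall>u. poly_fun (\<lambda>x. D x u)" using poly_fun_deriv by blast
  have fd: "frechet_derivative f (at x) = D x" for x using D(1) frechet_derivative_at by metis
  have "f differentiable_on UNIV" using D(1)
    by (meson differentiable_at_imp_differentiable_on differentiable_def)
  moreover have "Ck k (\<lambda>x. frechet_derivative f (at x) i)" for i
    unfolding fd using Suc.IH D(2) by blast
  ultimately show ?case by simp
qed

definition e0 :: pt where "e0 = (1, 0)"
definition e1 :: pt where "e1 = (0, axis 1 1)"
definition e2 :: pt where "e2 = (0, axis 2 1)"

definition cc :: "pt \<Rightarrow> pt" where
  "cc p = (- (((snd p)$1 * (snd p)$1 + (snd p)$2 * (snd p)$2 - 2 * ((snd p)$3 * (snd p)$3)) / 2)) *\<^sub>R e0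
        + ((snd p)$2 * (snd p)$3) *\<^sub>R e1 + (- ((snd p)$1 * (snd p)$3)) *\<^sub>R e2"

definition Dcc :: "pt \<Rightarrow> pt \<Rightarrow> pt" where
  "Dcc p u = (- ((snd p)$1 * (snd u)$1 + (snd p)$2 * (snd u)$2 - 2 * ((snd p)$3 * (snd u)$3))) *\<^sub>R e0
        + ((snd u)$2 * (snd p)$3 + (snd p)$2 * (snd u)$3) *\<^sub>R e1
        + (- ((snd u)$1 * (snd p)$3 + (snd p)$1 * (snd u)$3)) *\<^sub>R e2"

lemma cc_deriv: "(cc has_derivative Dcc p) (at p)"
  unfolding cc_def[abs_def] Dcc_def[abs_def]
  apply (rule derivative_eq_intros snd_nth_deriv refl | simp)+
  apply (rule ext) apply (simp add: e0_def e1_def e2_def algebra_simps)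
  apply (simp add: field_simps)
  done

lemma fd_cc: "frechet_derivative cc (at p) = Dcc p"
  using cc_deriv frechet_derivative_at by metis

lemma inner_e: "(a *\<^sub>R e0 + b *\<^sub>R e1 + c *\<^sub>R e2) \<bullet> (t, V) = a * t + b * V$1 + c * V$2"
  by (simp add: e0_def e1_def e2_def inner_add_left inner_axis')

lemma cc_prim: "d_form cc p u v = omega p u v"
proof -
  obtain t x where p: "p = (t, x)" by fastforce
  obtain a U where u: "u = (a, U)" by fastforce
  obtain b V where v: "v = (b, V)" by fastforce
  show ?thesis unfolding p u v d_form_def fd_cc
    unfolding Dcc_def snd_conv inner_e omega_def Let_def fst_conv
    by (simp add: algebra_simps)
qed

lemma pf_neg: "poly_fun f \<Longrightarrow> poly_fun (\<lambda>p. - f p)"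
  using pf_mult[OF pf_const[of "-1"]] by simp
lemma pf_diff: "poly_fun f \<Longrightarrow> poly_fun g \<Longrightarrow> poly_fun (\<lambda>p. f p - g p)"
  using pf_add[OF _ pf_neg] by simp
lemma pf_divc: "poly_fun f \<Longrightarrow> poly_fun (\<lambda>p. f p / c)"
  using pf_mult[OF _ pf_const[of "1/c"]] by simp

lemma cc_inner: "cc p \<bullet> b = (- (((snd p)$1 * (snd p)$1 + (snd p)$2 * (snd p)$2 - 2 * ((snd p)$3 * (snd p)$3)) / 2)) * fst b
   + ((snd p)$2 * (snd p)$3) * (snd b)$1 + (- ((snd p)$1 * (snd p)$3)) * (snd b)$2"
  unfolding cc_def by (metis inner_e prod.collapse)

lemma smooth_cc: "smooth_field cc"
  unfolding smooth_field_def smooth_fun_def cc_inner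
  by (intro ballI allI poly_fun_Ck) (rule pf_add pf_mult pf_neg pf_diff pf_divc pf_const pf_snd)+

lemma periodic_cc: "periodic_A cc"
  unfolding periodic_A_def cc_def by simp

lemma invariant_cc: "invariant_B cc"
  unfolding invariant_B_def cc_inner deckB_def phi3_def by (simp add: algebra_simps)

definition cr :: "real^3 \<Rightarrow> real^3 \<Rightarrow> real^3" where
  "cr x V = vector [x$2*V$3 - x$3*V$2, x$3*V$1 - x$1*V$3, x$1*V$2 - x$2*V$1]"

lemma contact_cc: "contact_on_bdry cc"
  unfolding contact_on_bdry_def
proof (intro allI impI)
  fix p assume bp: "bdry_pt p"
  obtain t x where p: "p = (t, x)" by fastforce
  define x1 where "x1 = x$1"
  define x2 where "x2 = x$2"
  define x3 where "x3 = x$3"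
  have xv: "x = vector [x1, x2, x3]" unfolding x1_def x2_def x3_def by (simp add: vec_eq_iff forall_3)
  have "x \<bullet> x = 1" using bp unfolding bdry_pt_def p by (simp add: norm_eq_1)
  then have n: "x1*x1+x2*x2+x3*x3 = 1" unfolding xv by (simp add: inner_vec_def sum_3)
  define E where "E V W = (cc p \<bullet> (1,0)) * d_form cc p (0,V) (0,W) + (cc p \<bullet> (0,V)) * d_form cc p (0,W) (1,0)
       + (cc p \<bullet> (0,W)) * d_form cc p (1,0) (0,V)" for V W
  define S where "S = x1*x1+x2*x2-2*(x3*x3)"
  define N where "N = S*S + 6*(x3*x3)*(x1*x1+x2*x2)"
  define V1 where "V1 = (vector [0, x3, -x2] :: real^3)"
  define V2 where "V2 = (vector [-x3, 0, x1] :: real^3)"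
  define V3 where "V3 = (vector [x2, -x1, 0] :: real^3)"
  have E1: "2 * E V1 (cr x V1) = - (x2*x2+x3*x3) * N"
    unfolding E_def cc_prim unfolding omega_def cc_inner cr_def V1_def N_def S_def p xv Let_def
    by (simp add: field_simps)
  have E2: "2 * E V2 (cr x V2) = - (x1*x1+x3*x3) * N"
    unfolding E_def cc_prim unfolding omega_def cc_inner cr_def V2_def N_def S_def p xv Let_def
    by (simp add: field_simps)
  have E3: "2 * E V3 (cr x V3) = - (x1*x1+x2*x2) * N"
    unfolding E_def cc_prim unfolding omega_def cc_inner cr_def V3_def N_def S_def p xv Let_def
    by (simp add: field_simps)
  have Npos: "N > 0"
  proof (rule ccontr)
    assume "\<not> N > 0"
    moreover have "S*S \<ge> 0" "(x3*x3)*(x1*x1+x2*x2) \<ge> 0" by simp_all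
    ultimately have a: "S*S = 0" and b: "(x3*x3)*(x1*x1+x2*x2) = 0" unfolding N_def by linarith+
    from a have S0: "S = 0" by simp
    from b have "x3 = 0 \<or> x1*x1+x2*x2 = 0" by simp
    then show False
    proof
      assume "x3 = 0" then show False using S0 n unfolding S_def by simp
    next
      assume h: "x1*x1+x2*x2 = 0"
      then have "x3*x3 = 0" using S0 unfolding S_def by simp
      then show False using h n by simp
    qed
  qed
  have T: "tangent p (1,0)" "tangent p (0,V1)" "tangent p (0,V2)" "tangent p (0,V3)"
     "tangent p (0, cr x V1)" "tangent p (0, cr x V2)" "tangent p (0, cr x V3)"
    unfolding tangent_def p V1_def V2_def V3_def cr_def xv
    by (simp_all add: inner_vec_def sum_3 algebra_simps)
  show "\<exists>u v w. tangent p u \<and> tangent p v \<and> tangent p w \<and>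
       (cc p \<bullet> u) * d_form cc p v w + (cc p \<bullet> v) * d_form cc p w u
       + (cc p \<bullet> w) * d_form cc p u v \<noteq> 0"
  proof (rule ccontr)
    assume H: "\<not> ?thesis"
    have z: "E V1 (cr x V1) = 0" "E V2 (cr x V2) = 0" "E V3 (cr x V3) = 0"
      using H T unfolding E_def by blast+
    have "(x2*x2+x3*x3) * N = 0" using E1 z(1) by linarith
    moreover have "(x1*x1+x3*x3) * N = 0" using E2 z(2) by linarith
    moreover have "(x1*x1+x2*x2) * N = 0" using E3 z(3) by linarith
    ultimately have "(x2*x2+x3*x3) * N + (x1*x1+x3*x3) * N + (x1*x1+x2*x2) * N = 0" by linarith
    then have "2 * (x1*x1+x2*x2+x3*x3) * N = 0" by (simp add: algebra_simps)
    with n Npos show False by simp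
  qed
qed

theorem mainTheorem7:
  shows "(\<exists>cA. smooth_field cA \<and> periodic_A cA \<and> contact_on_bdry cA \<and> primitive_on_bdry cA omega)
       \<and> (\<exists>cB. smooth_field cB \<and> invariant_B cB \<and> contact_on_bdry cB \<and> primitive_on_bdry cB omega)"
  using smooth_cc periodic_cc invariant_cc contact_cc cc_prim
  unfolding primitive_on_bdry_def by blast

end
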